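(* Let $\alpha,\theta,\gamma>0$, let $C_{K,r}=\max\big(4L^2K/(\theta^2\alpha N),\tilde r_2^2(\gamma)\big)$, and assume there is $A>0$ such that every $f\in F$ with $\|f-f^*\|_{L_2}^2=C_{K,r}$ satisfies $\|f-f^*\|_{L_2}^2\le AP\mathcal L_f$, and that $\theta-A^{-1}<-\theta$. Grant (Lip-Conv) and (Conv). Then on the event $\Omega_K$, $$\sup_{f\in F:\|f-f^*\|_{L_2}>\sqrt{C_{K,r}}}\mathrm{MOM}_K(\ell_{f^*}-\ell_f)<-\theta C_{K,r}\quad\text{and}\quad\sup_{f\in F:\|f-f^*\|_{L_2}\le\sqrt{C_{K,r}}}\mathrm{MOM}_K(\ell_{f^*}-\ell_f)\le\theta C_{K,r}.$$
   Context: Setting: $\bar{\mathcal Y}\subset\mathbb R$ convex, $F\subset L_2(\mu)$ a class of measurable functions $\mathcal X\to\bar{\mathcal Y}$, $\ell_f(x,y)=\bar\ell(f(x),y)$, $(X,Y)\sim P$, $X\sim\mu$, $Pg=\mathbb Eg(X,Y)$; $f^*$ unique minimizer of $f\mapsto P\ell_f$ over $F$, $\mathcal L_f=\ell_f-\ell_{f^*}$, $\|g\|_{L_2}=(\mathbb Eg(X)^2)^{1/2}$. (Lip-Conv): there is $L>0$ with $u\mapsto\bar\ell(u,y)$ convex and $L$-Lipschitz for all $y$. (Conv): $F$ convex. Data $(X_i,Y_i)_{i=1}^N$; $K$ divides $N$; blocks $B_1,\dots,B_K$ of size $N/K$ partition $\{1,\dots,N\}$; $P_{B_k}g=\frac KN\sum_{i\in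 B_k}g(X_i,Y_i)$; $\mathrm{MOM}_K(g)$ = median of $(P_{B_k}g)_k$. $\tilde r_2(\gamma)$ is a given positive number (the Rademacher complexity fixed point). Event: $\Omega_K=\{\forall f\in F\text{ with }\|f-f^*\|_{L_2}\le\sqrt{C_{K,r}},\ \exists J\subset\{1,\dots,K\},|J|>K/2,\ \forall k\in J:|(P_{B_k}-P)\mathcal L_f|\le\theta C_{K,r}\}$. *)

theory Defs
  imports "HOL-Analysis.Analysis" "HOL-Probability.Probability"
begin

text \<open>Median of a finite list of reals: the element at position (length div 2)
  of the sorted list (for odd length the usual median; for even length the upper median).\<close>
definition median_list :: "real list \<Rightarrow> real" where
  "median_list xs = sort xs ! (length xs div 2)"

definition block_mean ::
  "nat \<Rightarrow> nat \<Rightarrow> (nat \<Rightarrow> nat set) \<Rightarrow> (nat \<Rightarrow> 'x \<times> real) \<Rightarrow> nat \<Rightarrow> ('x \<times> real \<Rightarrow> real) \<Rightarrow> real"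
  where "block_mean N K B z k g = (real K / real N) * (\<Sum>i\<in>B k. g (z i))"

definition MOM ::
  "nat \<Rightarrow> nat \<Rightarrow> (nat \<Rightarrow> nat set) \<Rightarrow> (nat \<Rightarrow> 'x \<times> real) \<Rightarrow> ('x \<times> real \<Rightarrow> real) \<Rightarrow> real"
  where "MOM N K B z g = median_list (map (\<lambda>k. block_mean N K B z k g) [1..<K+1])"

definition L2norm :: "'x measure \<Rightarrow> ('x \<Rightarrow> real) \<Rightarrow> real" where
  "L2norm \<mu> g = sqrt (\<integral>x. (g x)\<^sup>2 \<partial>\<mu>)"

definition loss :: "(real \<Rightarrow> real \<Rightarrow> real) \<Rightarrow> ('x \<Rightarrow> real) \<Rightarrow> 'x \<times> real \<Rightarrow> real" where
  "loss lbar f = (\<lambda>(x, y). lbar (f x) y)"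

end

theory Submission
  imports Defs
begin


lemma filter_sort_len: "length (filter P (sort xs)) = length (filter P (xs::real list))"
proof -
  have "mset (filter P (sort xs)) = mset (filter P xs)" by simp
  then show ?thesis by (metis size_mset)
qed

lemma median_le:
  fixes xs :: "real list"
  assumes "length (filter (\<lambda>x. x \<le> a) xs) > length xs div 2"
  shows "median_list xs \<le> a"
proof (rule ccontr)
  assume "\<not> median_list xs \<le> a"
  define ys where "ys = sort xs"
  define j where "j = length xs div 2"
  have len: "length ys = length xs" by (simp add: ys_def)
  have gt: "ys ! j > a" using \<open>\<not> median_list xs \<le> a\<close> by (simp add: median_list_def ys_def j_def)
  have "\<forall>x\<in>set (drop j ys). x > a"
  proof
    fix x assume "x \<in> set (drop j ys)"
    then obtain i where i: "i < length (drop j ys)" "x = drop j ys ! i" by (metis in_set_conv_nth)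
    then have "x = ys ! (j + i)" "j + i < length ys" by auto
    moreover have "sorted ys" by (simp add: ys_def)
    ultimately have "ys ! j \<le> x" by (metis le_add1 sorted_nth_mono)
    then show "x > a" using gt by simp
  qed
  then have "filter (\<lambda>x. x \<le> a) (drop j ys) = []" by (auto simp: filter_empty_conv)
  moreover have "filter (\<lambda>x. x \<le> a) ys = filter (\<lambda>x. x \<le> a) (take j ys) @ filter (\<lambda>x. x \<le> a) (drop j ys)"
    using filter_append[of "\<lambda>x. x \<le> a" "take j ys" "drop j ys"] by simp
  ultimately have e: "filter (\<lambda>x. x \<le> a) ys = filter (\<lambda>x. x \<le> a) (take j ys)"
    by simp
  have "length (filter (\<lambda>x. x \<le> a) (take j ys)) \<le> length (take j ys)" by (rule length_filter_le)
  also have "\<dots> \<le> j" by simp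
  finally have "length (filter (\<lambda>x. x \<le> a) ys) \<le> j" using e by simp
  then show False using assms filter_sort_len[of "\<lambda>x. x \<le> a" xs] ys_def j_def by simp
qed

lemma mom_le:
  assumes "J \<subseteq> {1..K}" "real (card J) > real K / 2"
    "\<forall>k\<in>J. block_mean N K B z k g \<le> a"
  shows "MOM N K B z g \<le> a"
proof -
  let ?h = "\<lambda>k. block_mean N K B z k g"
  have "filter (\<lambda>x. x \<le> a) (map ?h [1..<K+1]) = map ?h (filter (\<lambda>k. ?h k \<le> a) [1..<K+1])"
    by (simp add: filter_map o_def)
  then have "length (filter (\<lambda>x. x \<le> a) (map ?h [1..<K+1])) = length (filter (\<lambda>k. ?h k \<le> a) [1..<K+1])"
    by (metis length_map)
  also have "\<dots> = card (set (filter (\<lambda>k. ?h k \<le> a) [1..<K+1]))"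
    by (rule distinct_card[symmetric]) simp
  also have "set (filter (\<lambda>k. ?h k \<le> a) [1..<K+1]) = {k\<in>{1..K}. ?h k \<le> a}" by auto
  also have "card {k\<in>{1..K}. ?h k \<le> a} \<ge> card J"
    by (rule card_mono) (use assms in auto)
  finally have c: "length (filter (\<lambda>x. x \<le> a) (map ?h [1..<K+1])) \<ge> card J" .
  have "card J > K div 2" using assms(2) by linarith
  then have "length (filter (\<lambda>x. x \<le> a) (map ?h [1..<K+1])) > length (map ?h [1..<K+1]) div 2"
    using c by (simp del: upt_Suc)
  then show ?thesis unfolding MOM_def by (rule median_le)
qed

lemma bm_mono: "(\<And>w. g w \<le> h w) \<Longrightarrow> block_mean N K B z k g \<le> block_mean N K B z k h"
  unfolding block_mean_def by (intro mult_left_mono sum_mono) auto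

lemma bm_cmult: "block_mean N K B z k (\<lambda>w. t * g w) = t * block_mean N K B z k g"
  unfolding block_mean_def by (simp add: sum_distrib_left algebra_simps)

lemma bm_neg: "block_mean N K B z k (\<lambda>w. a w - b w) = - block_mean N K B z k (\<lambda>w. b w - a w)"
  unfolding block_mean_def by (simp add: sum_subtractf algebra_simps)


theorem lemma2:
  fixes M :: "'x measure" and P :: "('x \<times> real) measure"
    and Ybar :: "real set" and F :: "('x \<Rightarrow> real) set" and fstar :: "'x \<Rightarrow> real"
    and lbar :: "real \<Rightarrow> real \<Rightarrow> real" and Lc :: real
    and N K :: nat and B :: "nat \<Rightarrow> nat set" and z :: "nat \<Rightarrow> 'x \<times> real"
    and \<alpha> \<theta> \<gamma> A :: real and r2 :: "real \<Rightarrow> real" and C :: real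
  defines "\<mu> \<equiv> distr P M fst"
  defines "C \<equiv> max (4 * Lc\<^sup>2 * real K / (\<theta>\<^sup>2 * \<alpha> * real N)) ((r2 \<gamma>)\<^sup>2)"
  assumes P_prob: "prob_space P"
    and P_sets: "sets P = sets (M \<Otimes>\<^sub>M borel)"
    and Ybar_convex: "convex Ybar"
    and F_L2: "\<forall>f\<in>F. f \<in> borel_measurable M \<and> (\<forall>x. f x \<in> Ybar) \<and> integrable \<mu> (\<lambda>x. (f x)\<^sup>2)"
    and F_loss_int: "\<forall>f\<in>F. integrable P (loss lbar f)"
    and fstar_in: "fstar \<in> F"
    and fstar_min: "\<forall>f\<in>F. f \<noteq> fstar \<longrightarrow> (\<integral>w. loss lbar fstar w \<partial>P) < (\<integral>w. loss lbar f w \<partial>P)"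
    and Lip_Conv: "Lc > 0" "\<forall>y. convex_on Ybar (\<lambda>u. lbar u y)" "\<forall>y. Lc-lipschitz_on Ybar (\<lambda>u. lbar u y)"
    and Conv: "\<forall>f\<in>F. \<forall>g\<in>F. \<forall>t\<in>{0..1}. (\<lambda>x. (1 - t) * f x + t * g x) \<in> F"
    and N_pos: "0 < N" and K_pos: "0 < K" and K_dvd: "K dvd N"
    and B_part: "(\<Union>k\<in>{1..K}. B k) = {1..N}"
      "\<forall>k\<in>{1..K}. \<forall>k'\<in>{1..K}. k \<noteq> k' \<longrightarrow> B k \<inter> B k' = {}"
      "\<forall>k\<in>{1..K}. card (B k) = N div K"
    and params: "\<alpha> > 0" "\<theta> > 0" "\<gamma> > 0" "r2 \<gamma> > 0"
    and A_pos: "A > 0"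
    and A_cond: "\<forall>f\<in>F. (L2norm \<mu> (\<lambda>x. f x - fstar x))\<^sup>2 = C \<longrightarrow>
        (L2norm \<mu> (\<lambda>x. f x - fstar x))\<^sup>2 \<le> A * (\<integral>w. (loss lbar f w - loss lbar fstar w) \<partial>P)"
    and A_theta: "\<theta> - 1 / A < - \<theta>"
    and Omega_K: "\<forall>f\<in>F. L2norm \<mu> (\<lambda>x. f x - fstar x) \<le> sqrt C \<longrightarrow>
        (\<exists>J \<subseteq> {1..K}. real (card J) > real K / 2 \<and>
           (\<forall>k\<in>J. \<bar>block_mean N K B z k (\<lambda>w. loss lbar f w - loss lbar fstar w)
                    - (\<integral>w. (loss lbar f w - loss lbar fstar w) \<partial>P)\<bar> \<le> \<theta> * C))"
  shows "(SUP f\<in>{f\<in>F. L2norm \<mu> (\<lambda>x. f x - fstar x) > sqrt C}.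
            ereal (MOM N K B z (\<lambda>w. loss lbar fstar w - loss lbar f w))) < ereal (- \<theta> * C)
       \<and> (SUP f\<in>{f\<in>F. L2norm \<mu> (\<lambda>x. f x - fstar x) \<le> sqrt C}.
            ereal (MOM N K B z (\<lambda>w. loss lbar fstar w - loss lbar f w))) \<le> ereal (\<theta> * C)"
proof -
  let ?L = "\<lambda>g w. loss lbar g w - loss lbar fstar w"
  let ?D = "\<lambda>g. \<integral>w. ?L g w \<partial>P"
  let ?nrm = "\<lambda>g. L2norm \<mu> (\<lambda>x. g x - fstar x)"
  have "C \<ge> (r2 \<gamma>)\<^sup>2" unfolding C_def by simp
  moreover have "(r2 \<gamma>)\<^sup>2 > 0" using params(4) by simp
  ultimately have Cpos: "C > 0" by linarith
  have Dnn: "?D g \<ge> 0" if g: "g \<in> F" for g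
  proof -
    have "?D g = (\<integral>w. loss lbar g w \<partial>P) - (\<integral>w. loss lbar fstar w \<partial>P)"
      using F_loss_int g fstar_in by (intro Bochner_Integration.integral_diff) auto
    moreover have "(\<integral>w. loss lbar fstar w \<partial>P) \<le> (\<integral>w. loss lbar g w \<partial>P)"
      using fstar_min g by (cases "g = fstar") (auto intro: less_imp_le)
    ultimately show ?thesis by simp
  qed
  have part2: "MOM N K B z (\<lambda>w. loss lbar fstar w - loss lbar f w) \<le> \<theta> * C"
    if f: "f \<in> F" "?nrm f \<le> sqrt C" for f
  proof -
    obtain J where J: "J \<subseteq> {1..K}" "real (card J) > real K / 2"
      "\<forall>k\<in>J. \<bar>block_mean N K B z k (?L f) - ?D f\<bar> \<le> \<theta> * C"
      using Omega_K f by blast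
    show ?thesis
    proof (rule mom_le[OF J(1,2)], intro ballI)
      fix k assume "k \<in> J"
      then have "\<bar>block_mean N K B z k (?L f) - ?D f\<bar> \<le> \<theta> * C" using J(3) by blast
      then show "block_mean N K B z k (\<lambda>w. loss lbar fstar w - loss lbar f w) \<le> \<theta> * C"
        using Dnn[OF f(1)] bm_neg[of N K B z k "loss lbar fstar" "loss lbar f"] by linarith
    qed
  qed
  define c where "c = C / A - \<theta> * C"
  have c_gt: "c > \<theta> * C"
  proof -
    have "1 / A - 2 * \<theta> > 0" using A_theta by linarith
    then have "C * (1 / A - 2 * \<theta>) > 0" using Cpos by simp
    then show ?thesis unfolding c_def by (simp add: algebra_simps)
  qed
  have cpos: "c > 0" using c_gt params(2) Cpos by (smt (verit) mult_pos_pos)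
  have part1: "MOM N K B z (\<lambda>w. loss lbar fstar w - loss lbar f w) \<le> - c"
    if f: "f \<in> F" "?nrm f > sqrt C" for f
  proof -
    define r where "r = ?nrm f"
    define t where "t = sqrt C / r"
    have rpos: "r > 0" using f(2) Cpos r_def by (smt (verit) real_sqrt_gt_zero)
    have t0: "t > 0" using rpos Cpos by (simp add: t_def)
    have t1: "t < 1" using f(2) rpos by (simp add: t_def r_def)
    define f0 where "f0 = (\<lambda>x. (1 - t) * fstar x + t * f x)"
    have "t \<in> {0..1}" using t0 t1 by simp
    then have f0F: "f0 \<in> F" using Conv fstar_in f(1) unfolding f0_def by blast
    have eq: "(\<lambda>x. f0 x - fstar x) = (\<lambda>x. t * (f x - fstar x))"
      by (auto simp: f0_def algebra_simps)
    have "?nrm f0 = sqrt (\<integral>x. t\<^sup>2 * (f x - fstar x)\<^sup>2 \<partial>\<mu>)"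
      unfolding L2norm_def eq by (simp add: power_mult_distrib)
    also have "\<dots> = sqrt (t\<^sup>2 * (\<integral>x. (f x - fstar x)\<^sup>2 \<partial>\<mu>))" by simp
    also have "\<dots> = t * r" using t0 by (simp add: r_def L2norm_def real_sqrt_mult)
    also have "\<dots> = sqrt C" using rpos by (simp add: t_def)
    finally have n0: "?nrm f0 = sqrt C" .
    then have "(?nrm f0)\<^sup>2 = C" using Cpos by simp
    then have "C \<le> A * ?D f0" using A_cond f0F by simp
    then have D0: "?D f0 \<ge> C / A" using A_pos by (simp add: field_simps)
    obtain J where J: "J \<subseteq> {1..K}" "real (card J) > real K / 2"
      "\<forall>k\<in>J. \<bar>block_mean N K B z k (?L f0) - ?D f0\<bar> \<le> \<theta> * C"
      using bspec[OF Omega_K f0F] n0 by auto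
    have pw: "?L f0 w \<le> t * ?L f w" for w
    proof -
      obtain x y where w: "w = (x, y)" by (cases w)
      have "lbar ((1 - t) *\<^sub>R fstar x + t *\<^sub>R f x) y \<le> (1 - t) * lbar (fstar x) y + t * lbar (f x) y"
        using Lip_Conv(2) F_L2 fstar_in f(1) t0 t1
        by (intro convex_onD[where f="\<lambda>u. lbar u y" and A=Ybar]) simp_all
      then show ?thesis by (simp add: w loss_def f0_def algebra_simps)
    qed
    show ?thesis
    proof (rule mom_le[OF J(1,2)], intro ballI)
      fix k assume "k \<in> J"
      then have "\<bar>block_mean N K B z k (?L f0) - ?D f0\<bar> \<le> \<theta> * C" using J(3) by blast
      then have b0: "block_mean N K B z k (?L f0) \<ge> c" using D0 unfolding c_def by (simp add: abs_le_iff)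
      have "block_mean N K B z k (?L f0) \<le> block_mean N K B z k (\<lambda>w. t * ?L f w)"
        by (rule bm_mono) (rule pw)
      also have "\<dots> = t * block_mean N K B z k (?L f)" by (rule bm_cmult)
      finally have "t * block_mean N K B z k (?L f) \<ge> c" using b0 by linarith
      moreover have "block_mean N K B z k (?L f) > 0"
        using calculation cpos t0 by (metis less_le_trans zero_less_mult_pos)
      moreover have "t * block_mean N K B z k (?L f) \<le> block_mean N K B z k (?L f)"
        using calculation t0 t1 by (intro mult_left_le_one_le) auto
      ultimately have "block_mean N K B z k (?L f) \<ge> c" by linarith
      then show "block_mean N K B z k (\<lambda>w. loss lbar fstar w - loss lbar f w) \<le> - c"
        using bm_neg[of N K B z k "loss lbar fstar" "loss lbar f"] by linarith
    qed
  qed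
  have "(SUP f\<in>{f\<in>F. ?nrm f > sqrt C}.
            ereal (MOM N K B z (\<lambda>w. loss lbar fstar w - loss lbar f w))) \<le> ereal (- c)"
  proof (rule SUP_least)
    fix f assume "f \<in> {f\<in>F. ?nrm f > sqrt C}"
    then have "f \<in> F" "?nrm f > sqrt C" by auto
    then show "ereal (MOM N K B z (\<lambda>w. loss lbar fstar w - loss lbar f w)) \<le> ereal (- c)"
      using part1 by simp
  qed
  also have "\<dots> < ereal (- \<theta> * C)" using c_gt by simp
  finally have 1: "(SUP f\<in>{f\<in>F. ?nrm f > sqrt C}.
            ereal (MOM N K B z (\<lambda>w. loss lbar fstar w - loss lbar f w))) < ereal (- \<theta> * C)" .
  have 2: "(SUP f\<in>{f\<in>F. ?nrm f \<le> sqrt C}.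
            ereal (MOM N K B z (\<lambda>w. loss lbar fstar w - loss lbar f w))) \<le> ereal (\<theta> * C)"
  proof (rule SUP_least)
    fix f assume "f \<in> {f\<in>F. ?nrm f \<le> sqrt C}"
    then have "f \<in> F" "?nrm f \<le> sqrt C" by auto
    then show "ereal (MOM N K B z (\<lambda>w. loss lbar fstar w - loss lbar f w)) \<le> ereal (\<theta> * C)"
      using part2 by simp
  qed
  show ?thesis by (rule conjI[OF 1 2])
qed

end
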